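(* Consider (CVOP) and its associated convex projection (Pv). (1) Let (CVOP) be bounded. If $\bar X\subseteq\mathcal{X}$ is a Hausdorff-type finite $\epsilon$-infimizer of (CVOP), then $\bar S:=\{(x,\Gamma(x)):x\in\bar X\}$ is a finite $\epsilon$-solution of (Pv). (2) Let (Pv) be self-bounded with $(\operatorname{cl}Y_a)_\infty=\operatorname{cl}C$. If $\bar S\subseteq S_a$ is a finite $\epsilon$-solution of (Pv), then $\bar X:=\operatorname{proj}_x[\bar S]$ is a Hausdorff-type finite $\xi$-infimizer of (CVOP) for every $\xi>\epsilon$.
   Context: (CVOP): $\min\Gamma(x)$ w.r.t. $\le_C$ s.t. $x\in\mathcal{X}$, with $C\subseteq\mathbb{R}^m$ a non-trivial pointed solid convex cone, $\mathcal{X}\subseteq\mathbb{R}^n$ convex, $\Gamma$ $C$-convex; upper image $\mathcal{G}=\operatorname{cl}(\Gamma[\mathcal{X}]+C)$; bounded means $\mathcal{G}\subseteq\{q\}+C$ for some $q$. Fix a $p$-norm $\|\cdot\|$ with closed balls $B_\epsilon$. Hausdorff distance $d_H(A_1,A_2)=\max\{\sup_{a_1\in A_1}\inf_{a_2\in A_2}\|a_1-a_2\|,\sup_{a_2\in A_2}\inf_{a_1\in A_1}\|a_1-a_2\|\}$. A nonempty finite $\bar X\subseteq\mathcal{X}$ is a Hausdorff-type finite $\epsilon$-infimizer of bounded (CVOP) if $d_H(\mathcal{G},\operatorname{conv}\Gamma[\bar X]+C)\le\epsilon$. (Pv): compute $Y_a=\operatorname{proj}_y[S_a]$ with $S_a=\{(x,y):x\in\mathcal{X},y\in\Gamma(x)+C\}$.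 Recession cone $A_\infty=\{y:x+\lambda y\in A\ \forall x\in A,\lambda\ge0\}$. (Pv) is self-bounded if $Y_a\ne\mathbb{R}^m$ and $Y_a\subseteq\operatorname{conv}\{y^{(1)},\dots,y^{(k)}\}+(\operatorname{cl}Y_a)_\infty$ for finitely many points; a nonempty finite $\bar S\subseteq S_a$ is a finite $\epsilon$-solution of self-bounded (Pv) if $Y_a\subseteq\operatorname{conv}\operatorname{proj}_y[\bar S]+(\operatorname{cl}Y_a)_\infty+B_\epsilon$. $\operatorname{proj}_x(x,y)=x$. *)

theory Defs
  imports "HOL-Analysis.Analysis"
begin

definition pnorm :: "ereal \<Rightarrow> real^'m \<Rightarrow> real" where
  "pnorm p y = (if p = \<infinity> then Max (range (\<lambda>i. \<bar>y $ i\<bar>))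
               else (\<Sum>i\<in>UNIV. \<bar>y $ i\<bar> powr real_of_ereal p) powr (1 / real_of_ereal p))"

definition pball :: "ereal \<Rightarrow> real \<Rightarrow> (real^'m) set" where
  "pball p eps = {y. pnorm p y \<le> eps}"

definition msum :: "('a::plus) set \<Rightarrow> 'a set \<Rightarrow> 'a set" where
  "msum A B = {a + b | a b. a \<in> A \<and> b \<in> B}"

definition hdist_p :: "ereal \<Rightarrow> (real^'m) set \<Rightarrow> (real^'m) set \<Rightarrow> ereal" where
  "hdist_p p A1 A2 = max (SUP a1\<in>A1. INF a2\<in>A2. ereal (pnorm p (a1 - a2)))
                         (SUP a2\<in>A2. INF a1\<in>A1. ereal (pnorm p (a1 - a2)))"

definition rec_cone :: "('a::real_vector) set \<Rightarrow> 'a set" where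
  "rec_cone A = {y. \<forall>x\<in>A. \<forall>t::real. t \<ge> 0 \<longrightarrow> x + t *\<^sub>R y \<in> A}"

definition ordering_cone :: "(real^'m) set \<Rightarrow> bool" where
  "ordering_cone C \<longleftrightarrow> convex_cone C \<and> C \<noteq> {0} \<and> C \<noteq> UNIV
     \<and> C \<inter> uminus ` C = {0} \<and> interior C \<noteq> {}"

definition C_convex :: "(real^'m) set \<Rightarrow> (real^'n) set \<Rightarrow> (real^'n \<Rightarrow> real^'m) \<Rightarrow> bool" where
  "C_convex C X \<Gamma> \<longleftrightarrow> (\<forall>x\<in>X. \<forall>x'\<in>X. \<forall>t::real. 0 \<le> t \<and> t \<le> 1 \<longrightarrow>
      t *\<^sub>R \<Gamma> x + (1 - t) *\<^sub>R \<Gamma> x' - \<Gamma> (t *\<^sub>R x + (1 - t) *\<^sub>R x') \<in> C)"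

definition upper_image :: "(real^'m) set \<Rightarrow> (real^'n) set \<Rightarrow> (real^'n \<Rightarrow> real^'m) \<Rightarrow> (real^'m) set" where
  "upper_image C X \<Gamma> = closure (msum (\<Gamma> ` X) C)"

definition cvop_bounded :: "(real^'m) set \<Rightarrow> (real^'n) set \<Rightarrow> (real^'n \<Rightarrow> real^'m) \<Rightarrow> bool" where
  "cvop_bounded C X \<Gamma> \<longleftrightarrow> (\<exists>q. upper_image C X \<Gamma> \<subseteq> msum {q} C)"

definition hausdorff_infimizer ::
  "ereal \<Rightarrow> real \<Rightarrow> (real^'m) set \<Rightarrow> (real^'n) set \<Rightarrow> (real^'n \<Rightarrow> real^'m) \<Rightarrow> (real^'n) set \<Rightarrow> bool" where
  "hausdorff_infimizer p eps C X \<Gamma> Xb \<longleftrightarrow> Xb \<noteq> {} \<and> finite Xb \<and> Xb \<subseteq> X \<and>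
     hdist_p p (upper_image C X \<Gamma>) (msum (convex hull (\<Gamma> ` Xb)) C) \<le> ereal eps"

definition S_a :: "(real^'m) set \<Rightarrow> (real^'n) set \<Rightarrow> (real^'n \<Rightarrow> real^'m) \<Rightarrow> ((real^'n) \<times> (real^'m)) set" where
  "S_a C X \<Gamma> = {(x, y). x \<in> X \<and> y \<in> msum {\<Gamma> x} C}"

definition Y_a :: "(real^'m) set \<Rightarrow> (real^'n) set \<Rightarrow> (real^'n \<Rightarrow> real^'m) \<Rightarrow> (real^'m) set" where
  "Y_a C X \<Gamma> = snd ` S_a C X \<Gamma>"

definition self_bounded :: "(real^'m) set \<Rightarrow> (real^'n) set \<Rightarrow> (real^'n \<Rightarrow> real^'m) \<Rightarrow> bool" where
  "self_bounded C X \<Gamma> \<longleftrightarrow> Y_a C X \<Gamma> \<noteq> UNIV \<and>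
     (\<exists>P. finite P \<and> Y_a C X \<Gamma> \<subseteq> msum (convex hull P) (rec_cone (closure (Y_a C X \<Gamma>))))"

definition finite_eps_solution ::
  "ereal \<Rightarrow> real \<Rightarrow> (real^'m) set \<Rightarrow> (real^'n) set \<Rightarrow> (real^'n \<Rightarrow> real^'m) \<Rightarrow> ((real^'n) \<times> (real^'m)) set \<Rightarrow> bool" where
  "finite_eps_solution p eps C X \<Gamma> Sb \<longleftrightarrow> Sb \<noteq> {} \<and> finite Sb \<and> Sb \<subseteq> S_a C X \<Gamma> \<and>
     Y_a C X \<Gamma> \<subseteq> msum (msum (convex hull (snd ` Sb)) (rec_cone (closure (Y_a C X \<Gamma>)))) (pball p eps)"

end

theory Submission
  imports Defs
begin
lemma pnorm_ge_comp:
  fixes v :: "real^'m"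
  assumes p: "1 \<le> p" shows "\<bar>v$i\<bar> \<le> pnorm p v"
proof (cases "p = \<infinity>")
  case True
  then show ?thesis unfolding pnorm_def by (auto intro: Max_ge)
next
  case False
  define r where "r = real_of_ereal p"
  have r: "1 \<le> r" using p False unfolding r_def
    by (cases p) auto
  have "\<bar>v$i\<bar> powr r \<le> (\<Sum>j\<in>UNIV. \<bar>v $ j\<bar> powr r)"
    by (rule member_le_sum) auto
  then have "(\<bar>v$i\<bar> powr r) powr (1/r) \<le> (\<Sum>j\<in>UNIV. \<bar>v $ j\<bar> powr r) powr (1/r)"
    using r by (intro powr_mono2) auto
  moreover have "(\<bar>v$i\<bar> powr r) powr (1/r) = \<bar>v$i\<bar>"
    using r by (simp add: powr_powr)
  ultimately show ?thesis using False unfolding pnorm_def r_def by simp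
qed

lemma pnorm_nonneg: "1 \<le> p \<Longrightarrow> 0 \<le> pnorm p v"
  using pnorm_ge_comp[of p v] abs_ge_zero order_trans by blast

lemma pnorm_zero: "1 \<le> p \<Longrightarrow> pnorm p 0 = 0"
  unfolding pnorm_def by auto

lemma pnorm_cont:
  assumes p: "1 \<le> p" shows "continuous_on UNIV (pnorm p :: real^'m \<Rightarrow> real)"
proof (cases "p = \<infinity>")
  case True
  have "1-lipschitz_on UNIV (pnorm p :: real^'m \<Rightarrow> real)"
  proof (rule lipschitz_onI)
    have *: "pnorm p y \<le> pnorm p z + norm (y - z)" for y z :: "real^'m"
    proof -
      have "\<bar>y$i\<bar> \<le> pnorm p z + norm (y - z)" for i
      proof -
        have "\<bar>y$i\<bar> \<le> \<bar>z$i\<bar> + \<bar>(y-z)$i\<bar>" by auto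
        also have "\<dots> \<le> pnorm p z + norm (y - z)"
          using pnorm_ge_comp[OF p, of z i] component_le_norm_cart[of "y-z" i] by linarith
        finally show ?thesis .
      qed
      then show ?thesis using True unfolding pnorm_def by (auto simp: Max_le_iff)
    qed
    fix y z :: "real^'m"
    show "dist (pnorm p y) (pnorm p z) \<le> 1 * dist y z"
      using *[of y z] *[of z y] by (auto simp: dist_real_def dist_norm norm_minus_commute)
  qed auto
  then show ?thesis by (rule lipschitz_on_continuous_on)
next
  case False
  define r where "r = real_of_ereal p"
  have r: "1 \<le> r" using p False unfolding r_def
    by (cases p) auto
  have "continuous_on UNIV (\<lambda>v::real^'m. (\<Sum>j\<in>UNIV. \<bar>v $ j\<bar> powr r) powr (1/r))"
    using r by (intro continuous_on_powr' continuous_intros) (auto intro: sum_nonneg)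
  then show ?thesis using False unfolding pnorm_def r_def by simp
qed

lemma pball_compact:
  assumes p: "1 \<le> p" shows "compact (pball p e :: (real^'m) set)"
proof -
  have "closed (pball p e :: (real^'m) set)"
    unfolding pball_def using pnorm_cont[OF p]
    by (intro closed_Collect_le continuous_intros) auto
  moreover have "bounded (pball p e :: (real^'m) set)"
    unfolding bounded_iff
  proof (intro exI ballI)
    fix y :: "real^'m" assume "y \<in> pball p e"
    then have "\<bar>y$i\<bar> \<le> e" for i using pnorm_ge_comp[OF p, of y i] by (auto simp: pball_def)
    then have "(\<Sum>i\<in>UNIV. \<bar>y$i\<bar>) \<le> (\<Sum>i\<in>(UNIV::'m set). e)" by (intro sum_mono) auto
    then show "norm y \<le> real CARD('m) * e" using norm_le_l1_cart[of y] by simp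
  qed
  ultimately show ?thesis by (simp add: compact_eq_bounded_closed)
qed

lemma pnorm_cont_comp:
  assumes p: "1 \<le> p" and f: "continuous_on S f"
  shows "continuous_on S (\<lambda>x. pnorm p (f x :: real^'m))"
  using continuous_on_compose2[OF pnorm_cont[OF p] f] by auto

lemma msum_eq: "msum A B = (\<Union>x\<in>A. \<Union>y\<in>B. {x+y})"
  by (auto simp: msum_def)

lemma Y_a_iff: "y \<in> Y_a C X \<Gamma> \<longleftrightarrow> (\<exists>x\<in>X. \<exists>c\<in>C. y = \<Gamma> x + c)"
  by (force simp: Y_a_def S_a_def msum_def image_iff)

lemma upper_image_eq: "upper_image C X \<Gamma> = closure (Y_a C X \<Gamma>)"
proof -
  have "msum (\<Gamma> ` X) C = Y_a C X \<Gamma>"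
    unfolding Y_a_iff msum_def set_eq_iff by blast
  then show ?thesis by (simp add: upper_image_def)
qed

lemma Ya_add:
  assumes C: "convex_cone C" and "y \<in> Y_a C X \<Gamma>" "c \<in> C"
  shows "y + c \<in> Y_a C X \<Gamma>"
proof -
  obtain x d where "x \<in> X" "d \<in> C" "y = \<Gamma> x + d" using assms(2) by (auto simp: Y_a_iff)
  then show ?thesis using convex_cone_add[OF C \<open>d\<in>C\<close> \<open>c\<in>C\<close>]
    by (auto simp: Y_a_iff add.assoc intro!: bexI[of _ x])
qed

lemma clYa_add:
  assumes C: "convex_cone C" and "y \<in> closure (Y_a C X \<Gamma>)" "c \<in> C"
  shows "y + c \<in> closure (Y_a C X \<Gamma>)"
proof -
  have "(\<lambda>z. z + c) ` closure (Y_a C X \<Gamma>) \<subseteq> closure (Y_a C X \<Gamma>)"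
    apply (rule image_closure_subset)
    using Ya_add[OF C _ assms(3), of _ X \<Gamma>] closure_subset[of "Y_a C X \<Gamma>"]
    by (auto intro!: continuous_intros)
  then show ?thesis using assms(2) by auto
qed

lemma rec_sup:
  assumes C: "convex_cone C"
  shows "closure C \<subseteq> rec_cone (closure (Y_a C X \<Gamma>))"
proof
  fix y assume y: "y \<in> closure C"
  show "y \<in> rec_cone (closure (Y_a C X \<Gamma>))"
    unfolding rec_cone_def
  proof (intro CollectI ballI allI impI)
    fix x and t :: real assume x: "x \<in> closure (Y_a C X \<Gamma>)" and t: "0 \<le> t"
    have "(\<lambda>z. x + t *\<^sub>R z) ` closure C \<subseteq> closure (Y_a C X \<Gamma>)"
      apply (rule image_closure_subset)
      using clYa_add[OF C x] convex_cone_scaleR[OF C t]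
      by (auto intro!: continuous_intros)
    then show "x + t *\<^sub>R y \<in> closure (Y_a C X \<Gamma>)" using y by auto
  qed
qed

lemma clC_add:
  fixes C :: "'a::real_normed_vector set"
  assumes C: "convex_cone C" and "c \<in> C" "d \<in> closure C"
  shows "c + d \<in> closure C"
proof -
  have "(\<lambda>z. z + c) ` closure C \<subseteq> closure C"
    apply (rule image_closure_subset)
    using convex_cone_add[OF C _ assms(2)] closure_subset
    by (auto intro!: continuous_intros)
  then show ?thesis using assms(3) by (auto simp: add.commute)
qed

lemma Ya_convex:
  assumes C: "convex_cone C" and X: "convex X" and G: "C_convex C X \<Gamma>"
  shows "convex (Y_a C X \<Gamma>)"
  unfolding convex_def
proof (intro ballI allI impI)
  fix y1 y2 and u v :: real
  assume y1: "y1 \<in> Y_a C X \<Gamma>" and y2: "y2 \<in> Y_a C X \<Gamma>" and uv0: "0 \<le> u" "0 \<le> v" "u + v = 1"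
  note uv = uv0
  obtain x1 c1 where x1: "x1 \<in> X" "c1 \<in> C" "y1 = \<Gamma> x1 + c1" using y1 by (auto simp: Y_a_iff)
  obtain x2 c2 where x2: "x2 \<in> X" "c2 \<in> C" "y2 = \<Gamma> x2 + c2" using y2 by (auto simp: Y_a_iff)
  have v: "v = 1 - u" using uv by simp
  define x where "x = u *\<^sub>R x1 + (1 - u) *\<^sub>R x2"
  have xX: "x \<in> X" unfolding x_def using X x1 x2 uv v by (auto simp: convex_def)
  have m: "u *\<^sub>R \<Gamma> x1 + (1 - u) *\<^sub>R \<Gamma> x2 - \<Gamma> x \<in> C"
    using G x1 x2 uv v unfolding C_convex_def x_def by auto
  have cc: "u *\<^sub>R c1 + (1-u) *\<^sub>R c2 \<in> C"
    using convex_cone_add[OF C convex_cone_scaleR[OF C _ x1(2)] convex_cone_scaleR[OF C _ x2(2)]] uv v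
    by auto
  have "u *\<^sub>R y1 + v *\<^sub>R y2 = \<Gamma> x + ((u *\<^sub>R \<Gamma> x1 + (1 - u) *\<^sub>R \<Gamma> x2 - \<Gamma> x) + (u *\<^sub>R c1 + (1-u) *\<^sub>R c2))"
    unfolding v x1(3) x2(3) by (simp add: algebra_simps)
  then show "u *\<^sub>R y1 + v *\<^sub>R y2 \<in> Y_a C X \<Gamma>"
    using xX convex_cone_add[OF C m cc] Y_a_iff by blast
qed

lemma msumI: "y = a + b \<Longrightarrow> a \<in> A \<Longrightarrow> b \<in> B \<Longrightarrow> y \<in> msum A B"
  by (auto simp: msum_def)

lemma msum_single: "msum {a} C = (\<lambda>c. a + c) ` C"
  by (auto simp: msum_def)

lemma part1:
  fixes p :: ereal and eps :: real
    and C :: "(real^'m) set" and X :: "(real^'n) set" and \<Gamma> :: "real^'n \<Rightarrow> real^'m"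
  assumes p: "1 \<le> p"
    and C: "ordering_cone C"
    and bd: "cvop_bounded C X \<Gamma>"
    and hi: "hausdorff_infimizer p eps C X \<Gamma> Xb"
  shows "self_bounded C X \<Gamma> \<and> finite_eps_solution p eps C X \<Gamma> ((\<lambda>x. (x, \<Gamma> x)) ` Xb)"
proof -
  have Cc: "convex_cone C" and CU: "C \<noteq> UNIV" using C by (auto simp: ordering_cone_def)
  define Y where "Y = Y_a C X \<Gamma>"
  define G where "G = closure Y"
  have GU: "upper_image C X \<Gamma> = G" by (simp add: upper_image_eq G_def Y_def)
  obtain q where q: "G \<subseteq> msum {q} C" using bd GU by (auto simp: cvop_bounded_def)
  have recC: "closure C \<subseteq> rec_cone G" using rec_sup[OF Cc] by (simp add: G_def Y_def)
  have YG: "Y \<subseteq> G" by (simp add: G_def closure_subset)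
  have sb: "self_bounded C X \<Gamma>"
    unfolding self_bounded_def Y_def[symmetric] G_def[symmetric]
  proof
    show "Y \<noteq> UNIV"
    proof
      assume "Y = UNIV"
      then have "G = UNIV" by (simp add: G_def)
      then have "C = UNIV"
      proof -
        assume GU: "G = UNIV"
        have "w \<in> C" for w
        proof -
          have "q + w \<in> msum {q} C" using q GU by auto
          then show ?thesis by (auto simp: msum_def)
        qed
        then show ?thesis by auto
      qed
      then show False using CU by simp
    qed
    show "\<exists>P. finite P \<and> Y \<subseteq> msum (convex hull P) (rec_cone G)"
    proof (intro exI conjI)
      show "finite {q}" by simp
      show "Y \<subseteq> msum (convex hull {q}) (rec_cone G)"
        
      proof
        fix y assume "y \<in> Y"
        then have "y \<in> msum {q} C" using YG q by auto
        then obtain c where c: "c \<in> C" "y = q + c" by (auto simp: msum_single)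
        show "y \<in> msum (convex hull {q}) (rec_cone G)"
          using c recC closure_subset[of C] by (intro msumI[of y q c]) auto
      qed
    qed
  qed
  define K where "K = convex hull (\<Gamma> ` Xb)"
  define B where "B = msum K C"
  have Xb: "Xb \<noteq> {}" "finite Xb" "Xb \<subseteq> X"
    and hd: "hdist_p p G B \<le> ereal eps"
    using hi GU by (auto simp: hausdorff_infimizer_def K_def B_def)
  have Kc: "compact K" unfolding K_def using Xb by (intro compact_convex_hull finite_imp_compact) auto
  have main: "y \<in> msum (msum K (rec_cone G)) (pball p eps)" if y: "y \<in> Y" for y
  proof -
    define g where "g b = pnorm p (y - b)" for b
    have gc: "continuous_on S g" for S
      unfolding g_def by (intro pnorm_cont_comp[OF p] continuous_intros)
    have "(INF b\<in>B. ereal (g b)) \<le> (SUP a\<in>G. INF b\<in>B. ereal (pnorm p (a - b)))"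
      unfolding g_def using y YG by (intro SUP_upper) auto
    also have "\<dots> \<le> ereal eps" using hd unfolding hdist_p_def by simp
    finally have inf: "(INF b\<in>B. ereal (g b)) \<le> ereal eps" .
    define B' where "B' = msum K (closure C)"
    have BB': "B \<subseteq> B'" unfolding B_def B'_def msum_def using closure_subset by blast
    define T where "T = B' \<inter> {b. g b \<le> eps + 1}"
    have "closed B'" unfolding B'_def msum_eq by (intro compact_closed_sums Kc) auto
    then have "closed T" unfolding T_def using gc by (intro closed_Int closed_Collect_le continuous_intros) auto
    moreover have "bounded T"
      unfolding bounded_iff
    proof (intro exI ballI)
      fix b assume "b \<in> T"
      then have "g b \<le> eps + 1" by (simp add: T_def)
      then have "\<bar>(y - b)$i\<bar> \<le> eps + 1" for i using pnorm_ge_comp[OF p, of "y - b" i] by (simp add: g_def)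
      then have "(\<Sum>i\<in>UNIV. \<bar>(y-b)$i\<bar>) \<le> (\<Sum>i\<in>(UNIV::'m set). eps + 1)" by (intro sum_mono) auto
      then have "norm (y - b) \<le> real CARD('m) * (eps + 1)" using norm_le_l1_cart[of "y - b"] by simp
      moreover have "norm b \<le> norm y + norm (y - b)" using norm_triangle_ineq4[of y b]
        by (metis norm_minus_commute norm_triangle_sub add.commute)
      ultimately show "norm b \<le> norm y + real CARD('m) * (eps + 1)" by linarith
    qed
    ultimately have Tc: "compact T" by (simp add: compact_eq_bounded_closed)
    have "(INF b\<in>B. ereal (g b)) < ereal (eps + 1)" using inf by (simp add: le_less_trans)
    then obtain b1 where "b1 \<in> B" "ereal (g b1) < ereal (eps + 1)" by (auto simp: INF_less_iff)
    then have "b1 \<in> T" using BB' by (auto simp: T_def)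
    then have "T \<noteq> {}" by auto
    then obtain b0 where b0: "b0 \<in> T" and b0min: "\<And>b. b \<in> T \<Longrightarrow> g b0 \<le> g b"
      using continuous_attains_inf[OF Tc _ gc] by blast
    have g0: "g b0 \<le> eps"
    proof (rule ccontr)
      assume "\<not> g b0 \<le> eps"
      then have "(INF b\<in>B. ereal (g b)) < ereal (min (g b0) (eps + 1))" using inf by (simp add: le_less_trans)
      then obtain b where b: "b \<in> B" "ereal (g b) < ereal (min (g b0) (eps + 1))" unfolding INF_less_iff by blast
      then have "b \<in> T" "g b < g b0" using BB' by (auto simp: T_def)
      then show False using b0min[OF \<open>b \<in> T\<close>] by linarith
    qed
    from b0 obtain k d where kd: "k \<in> K" "d \<in> closure C" "b0 = k + d" by (auto simp: T_def B'_def msum_def)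
    have "y = (k + d) + (y - b0)" using kd by simp
    moreover have "k + d \<in> msum K (rec_cone G)" using kd recC by (auto simp: msum_def)
    moreover have "y - b0 \<in> pball p eps" using g0 by (simp add: pball_def g_def)
    ultimately show ?thesis by (rule msumI)
  qed
  have fe: "finite_eps_solution p eps C X \<Gamma> ((\<lambda>x. (x, \<Gamma> x)) ` Xb)"
    unfolding finite_eps_solution_def
  proof (intro conjI)
    show "(\<lambda>x. (x, \<Gamma> x)) ` Xb \<noteq> {}" "finite ((\<lambda>x. (x, \<Gamma> x)) ` Xb)" using Xb by auto
    show "(\<lambda>x. (x, \<Gamma> x)) ` Xb \<subseteq> S_a C X \<Gamma>"
      
    proof
      fix z assume "z \<in> (\<lambda>x. (x, \<Gamma> x)) ` Xb"
      then obtain x where x: "x \<in> Xb" "z = (x, \<Gamma> x)" by auto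
      have "\<Gamma> x \<in> msum {\<Gamma> x} C" unfolding msum_single
        using convex_cone_contains_0[OF Cc] by (intro image_eqI[of _ _ 0]) auto
      then show "z \<in> S_a C X \<Gamma>" using x Xb by (auto simp: S_a_def)
    qed
    have "snd ` (\<lambda>x. (x, \<Gamma> x)) ` Xb = \<Gamma> ` Xb" by (simp add: image_image)
    then show "Y_a C X \<Gamma> \<subseteq> msum (msum (convex hull (snd ` (\<lambda>x. (x, \<Gamma> x)) ` Xb)) (rec_cone (closure (Y_a C X \<Gamma>)))) (pball p eps)"
      using main by (auto simp: K_def G_def Y_def)
  qed
  show ?thesis using sb fe by simp
qed

lemma msumE: "y \<in> msum A B \<Longrightarrow> (\<And>a b. y = a + b \<Longrightarrow> a \<in> A \<Longrightarrow> b \<in> B \<Longrightarrow> P) \<Longrightarrow> P"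
  by (auto simp: msum_def)

lemma part2:
  fixes p :: ereal and eps :: real
    and C :: "(real^'m) set" and X :: "(real^'n) set" and \<Gamma> :: "real^'n \<Rightarrow> real^'m"
  assumes p: "1 \<le> p"
    and C: "ordering_cone C"
    and X: "convex X"
    and Gc: "C_convex C X \<Gamma>"
    and rc: "rec_cone (closure (Y_a C X \<Gamma>)) = closure C"
    and fs: "finite_eps_solution p eps C X \<Gamma> Sb"
    and xi: "\<xi> > eps"
  shows "hausdorff_infimizer p \<xi> C X \<Gamma> (fst ` Sb)"
proof -
  have Cc: "convex_cone C" using C by (auto simp: ordering_cone_def)
  define Y where "Y = Y_a C X \<Gamma>"
  define G where "G = closure Y"
  have GU: "upper_image C X \<Gamma> = G" by (simp add: upper_image_eq G_def Y_def)
  have YG: "Y \<subseteq> G" by (simp add: G_def closure_subset)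
  have Sb: "Sb \<noteq> {}" "finite Sb" "Sb \<subseteq> S_a C X \<Gamma>"
    and Yin: "Y \<subseteq> msum (msum (convex hull (snd ` Sb)) (closure C)) (pball p eps)"
    using fs rc by (auto simp: finite_eps_solution_def Y_def)
  define Xb where "Xb = fst ` Sb"
  define K where "K = convex hull (\<Gamma> ` Xb)"
  define B where "B = msum K C"
  have Kc: "compact K" unfolding K_def Xb_def using Sb by (intro compact_convex_hull finite_imp_compact) auto
  have XbX: "Xb \<subseteq> X" using Sb(3) by (auto simp: Xb_def S_a_def)
  have snd_B: "snd ` Sb \<subseteq> B"
  proof
    fix y assume "y \<in> snd ` Sb"
    then obtain x where xy: "(x, y) \<in> Sb" by force
    then have "x \<in> Xb" by (force simp: Xb_def)
    then have "\<Gamma> x \<in> K" unfolding K_def by (intro hull_inc) auto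
    moreover obtain c where "c \<in> C" "y = \<Gamma> x + c"
      using xy Sb(3) by (auto simp: S_a_def msum_single)
    ultimately show "y \<in> B" unfolding B_def by (intro msumI[of y "\<Gamma> x" c]) auto
  qed
  have Bconv: "convex B" unfolding B_def msum_eq K_def
    using Cc by (intro convex_sums convex_convex_hull) (auto simp: convex_cone_def)
  have hB: "convex hull (snd ` Sb) \<subseteq> B" using snd_B Bconv by (intro hull_minimal) auto
  define D where "D = msum (msum K (closure C)) (pball p eps)"
  have Dcl: "closed D" unfolding D_def msum_eq
    by (intro closed_compact_sums compact_closed_sums Kc pball_compact[OF p]) auto
  have YD: "Y \<subseteq> D"
  proof
    fix y assume "y \<in> Y"
    then have "y \<in> msum (msum (convex hull (snd ` Sb)) (closure C)) (pball p eps)" using Yin by auto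
    then obtain a e where ae: "y = a + e" "a \<in> msum (convex hull (snd ` Sb)) (closure C)" "e \<in> pball p eps"
      by (rule msumE)
    from ae(2) obtain s d where sd: "a = s + d" "s \<in> convex hull (snd ` Sb)" "d \<in> closure C"
      by (rule msumE)
    then have "s \<in> msum K C" using hB by (auto simp: B_def)
    then obtain k c where kc: "s = k + c" "k \<in> K" "c \<in> C" by (rule msumE)
    have "c + d \<in> closure C" using clC_add[OF Cc kc(3) sd(3)] .
    then have "k + (c + d) \<in> msum K (closure C)" using kc by (intro msumI) auto
    then show "y \<in> D" unfolding D_def using ae sd kc by (intro msumI[of y "k + (c + d)" e]) (auto simp: add.assoc)
  qed
  have GD: "G \<subseteq> D" unfolding G_def using YD Dcl by (rule closure_minimal)
  obtain z where "z \<in> Sb" using Sb by auto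
  then have "snd z \<in> Y" using Sb(3) by (auto simp: Y_def Y_a_def)
  then have "snd z \<in> msum (msum (convex hull (snd ` Sb)) (closure C)) (pball p eps)" using Yin by auto
  then obtain e0 where "e0 \<in> (pball p eps :: (real^'m) set)" by (auto elim: msumE)
  then have eps0: "0 \<le> eps" using pnorm_nonneg[OF p, of e0] by (auto simp: pball_def)
  have first: "(SUP a\<in>G. INF b\<in>B. ereal (pnorm p (a - b))) \<le> ereal \<xi>"
  proof (rule SUP_least)
    fix a assume "a \<in> G"
    then have "a \<in> D" using GD by auto
    then obtain kd e where kde: "a = kd + e" "kd \<in> msum K (closure C)" "e \<in> pball p eps"
      unfolding D_def by (rule msumE)
    from kde(2) obtain k d where "kd = k + d" and k: "k \<in> K" and d: "d \<in> closure C"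
      by (rule msumE)
    then have a: "a = k + d + e" and e: "pnorm p e \<le> eps" using kde by (auto simp: pball_def)
    define f where "f c = pnorm p (e + d - c)" for c
    have fc: "continuous_on S f" for S unfolding f_def by (intro pnorm_cont_comp[OF p] continuous_intros)
    have "f ` closure C \<subseteq> closure (f ` C)"
      by (rule image_closure_subset[OF fc]) (auto intro: closure_subset[THEN subsetD])
    then have fd: "f d \<in> closure (f ` C)" using d by auto
    have "(INF b\<in>B. ereal (pnorm p (a - b))) \<le> ereal eps"
    proof (rule ereal_le_epsilon2)
      fix \<delta> :: real assume "0 < \<delta>"
      then obtain w where w: "w \<in> f ` C" "dist w (f d) < \<delta>" using fd closure_approachable by blast
      then obtain c where c: "c \<in> C" "w = f c" by auto
      have "f d = pnorm p e" by (simp add: f_def)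
      then have "f c < eps + \<delta>" using w c e by (auto simp: dist_real_def)
      have "k + c \<in> B" unfolding B_def using k c by (intro msumI) auto
      then have "(INF b\<in>B. ereal (pnorm p (a - b))) \<le> ereal (pnorm p (a - (k + c)))" by (rule INF_lower)
      also have "a - (k + c) = e + d - c" using a by (simp add: algebra_simps)
      also have "ereal (pnorm p (e + d - c)) \<le> ereal eps + ereal \<delta>"
        using \<open>f c < eps + \<delta>\<close> by (simp add: f_def)
      finally show "(INF b\<in>B. ereal (pnorm p (a - b))) \<le> ereal eps + ereal \<delta>" .
    qed
    also have "\<dots> \<le> ereal \<xi>" using xi by simp
    finally show "(INF b\<in>B. ereal (pnorm p (a - b))) \<le> ereal \<xi>" .
  qed
  have BY: "B \<subseteq> Y"
  proof
    fix b assume "b \<in> B"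
    then obtain k c where kc: "b = k + c" "k \<in> K" "c \<in> C" unfolding B_def by (rule msumE)
    have "\<Gamma> ` Xb \<subseteq> Y" using XbX convex_cone_contains_0[OF Cc] by (force simp: Y_def Y_a_iff)
    then have "K \<subseteq> Y" unfolding K_def using Ya_convex[OF Cc X Gc] by (intro hull_minimal) (auto simp: Y_def)
    then show "b \<in> Y" using kc Ya_add[OF Cc, of k X \<Gamma> c] by (auto simp: Y_def)
  qed
  have second: "(SUP b\<in>B. INF a\<in>G. ereal (pnorm p (a - b))) \<le> ereal \<xi>"
  proof (rule SUP_least)
    fix b assume "b \<in> B"
    then have "b \<in> G" using BY YG by auto
    then have "(INF a\<in>G. ereal (pnorm p (a - b))) \<le> ereal (pnorm p (b - b))" by (rule INF_lower)
    also have "\<dots> \<le> ereal \<xi>" using eps0 xi by (simp add: pnorm_zero[OF p])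
    finally show "(INF a\<in>G. ereal (pnorm p (a - b))) \<le> ereal \<xi>" .
  qed
  have "Xb \<noteq> {}" "finite Xb" using Sb by (auto simp: Xb_def)
  then show ?thesis unfolding hausdorff_infimizer_def GU
    using XbX first second
    by (auto simp: Xb_def[symmetric] K_def[symmetric] B_def[symmetric] hdist_p_def)
qed

theorem mainTheorem19:
  fixes p :: ereal and eps :: real
    and C :: "(real^'m) set" and X :: "(real^'n) set" and \<Gamma> :: "real^'n \<Rightarrow> real^'m"
  assumes p: "1 \<le> p"
    and C: "ordering_cone C"
    and X: "convex X"
    and G: "C_convex C X \<Gamma>"
  shows "(cvop_bounded C X \<Gamma> \<longrightarrow>
            (\<forall>Xb. hausdorff_infimizer p eps C X \<Gamma> Xb \<longrightarrow>
               self_bounded C X \<Gamma> \<and>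
               finite_eps_solution p eps C X \<Gamma> ((\<lambda>x. (x, \<Gamma> x)) ` Xb)))
       \<and> ((self_bounded C X \<Gamma> \<and> rec_cone (closure (Y_a C X \<Gamma>)) = closure C) \<longrightarrow>
            (\<forall>Sb. finite_eps_solution p eps C X \<Gamma> Sb \<longrightarrow>
               (\<forall>\<xi>. \<xi> > eps \<longrightarrow> hausdorff_infimizer p \<xi> C X \<Gamma> (fst ` Sb))))"

  using part1[OF p C] part2[OF p C X G] by blast

end
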